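(* Let $\mathcal{K}$ be a Hilbert space, let $A$ be a closable, densely defined operator in $\mathcal{K}$ with closure $\bar A$ and adjoint $A^*$, and let $A_0$ be an operator in $\mathcal{K}$ with $A_0\subseteq A^*$ (so $A_0$ is closable; $\bar A_0$ denotes its closure). Suppose there exists a sequence $(T_n)_{n=0}^\infty\subseteq\mathbf{B}(\mathcal{K})$ such that $T_n\to I_\mathcal{K}$ in the weak operator topology as $n\to\infty$, $$\mathcal{R}(T_n)\subseteq\mathcal{D}(\bar A),\qquad \mathcal{R}(T_n^* )\subseteq\mathcal{D}(\bar A_0),\qquad n\in\mathbb{N},$$ and $$\sup_{n\in\mathbb{N}}\|\bar AT_n-T_n\bar A\|<+\infty.$$ Then $\bar A_0=A^*$.
   Context: $\mathbf{B}(\mathcal{K})$ denotes the space of all bounded linear operators defined on the whole of $\mathcal{K}$. $\mathcal{D}(S)$ and $\mathcal{R}(S)$ denote the domain and range of an operator $S$. Sums and products of unbounded operators are taken with their natural (maximal) domains, e.g. $\mathcal{D}(\bar AT_n-T_n\bar A)=\{f\in\mathcal{D}(\bar A): T_nf\in\mathcal{D}(\bar A)\}$. For a (not necessarily everywhere defined) operator $S$, $\|S\|=\sup\{\|Sf\|: f\in\mathcal{D}(S),\ \|f\|\le 1\}$. *)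

theory Defs
  imports "HOL-Analysis.Analysis"
begin

text \<open>Unbounded (not necessarily everywhere defined) linear operators in a
Hilbert space are represented by their graphs, i.e. sets of pairs (x, Sx).\<close>

definition is_operator :: "('a::real_vector \<times> 'a) set \<Rightarrow> bool" where
  "is_operator G \<longleftrightarrow> subspace G \<and> (\<forall>x y z. (x,y) \<in> G \<and> (x,z) \<in> G \<longrightarrow> y = z)"

definition op_dom :: "('a \<times> 'a) set \<Rightarrow> 'a set" where
  "op_dom G = fst ` G"

definition op_ran :: "('a \<times> 'a) set \<Rightarrow> 'a set" where
  "op_ran G = snd ` G"

definition op_graph :: "('a \<Rightarrow> 'a) \<Rightarrow> ('a \<times> 'a) set" where
  "op_graph T = {(x, T x) | x. True}"

definition op_closure :: "('a::real_normed_vector \<times> 'a) set \<Rightarrow> ('a \<times> 'a) set" where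
  "op_closure G = closure G"

definition closable :: "('a::real_normed_vector \<times> 'a) set \<Rightarrow> bool" where
  "closable G \<longleftrightarrow> is_operator (closure G)"

definition densely_defined :: "('a::real_normed_vector \<times> 'a) set \<Rightarrow> bool" where
  "densely_defined G \<longleftrightarrow> closure (op_dom G) = UNIV"

definition op_adj :: "('a::real_inner \<times> 'a) set \<Rightarrow> ('a \<times> 'a) set" where
  "op_adj G = {(y,z). \<forall>(x,w) \<in> G. inner w y = inner x z}"

definition op_comp :: "('a \<times> 'a) set \<Rightarrow> ('a \<times> 'a) set \<Rightarrow> ('a \<times> 'a) set" where
  "op_comp G H = {(x,z). \<exists>y. (x,y) \<in> H \<and> (y,z) \<in> G}"

definition op_diff :: "('a::ab_group_add \<times> 'a) set \<Rightarrow> ('a \<times> 'a) set \<Rightarrow> ('a \<times> 'a) set" where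
  "op_diff G H = {(x, y - z) | x y z. (x,y) \<in> G \<and> (x,z) \<in> H}"

definition op_norm :: "('a::real_normed_vector \<times> 'a) set \<Rightarrow> ereal" where
  "op_norm G = (SUP p \<in> {p \<in> G. norm (fst p) \<le> 1}. ereal (norm (snd p)))"

end

theory Submission
  imports Defs
begin


lemma parallelogram:
  fixes a b :: "'b::real_inner"
  shows "norm (a - b)^2 + norm (a + b)^2 = 2*norm a^2 + 2*norm b^2"
  by (simp add: power2_norm_eq_inner inner_diff inner_add algebra_simps inner_commute)

lemma proj_exists:
  fixes S :: "'b::{real_inner,complete_space} set"
  assumes sub: "subspace S" and cl: "closed S"
  shows "\<exists>s\<in>S. \<forall>t\<in>S. inner (x - s) t = 0"
proof -
  have ne: "S \<noteq> {}" using sub subspace_0 by blast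
  define d where "d = infdist x S"
  have d0: "d \<ge> 0" unfolding d_def by (rule infdist_nonneg)
  have dle: "d \<le> norm (x - s)" if "s \<in> S" for s
    using infdist_le[OF that, of x] by (simp add: d_def dist_norm)
  have "\<forall>n. \<exists>s\<in>S. norm (x - s) < d + 1/Suc n"
  proof
    fix n
    have "infdist x S < d + 1/Suc n" unfolding d_def by simp
    then have "(INF a\<in>S. dist x a) < d + 1/Suc n" using infdist_notempty[OF ne] by simp
    then obtain a where "a \<in> S" "dist x a < d + 1/Suc n"
      using ne by (subst (asm) cINF_less_iff) (auto intro: bdd_belowI2[where m=0])
    then show "\<exists>s\<in>S. norm (x - s) < d + 1/Suc n" by (auto simp: dist_norm)
  qed
  then obtain s where sS: "\<And>n. s n \<in> S" and sd: "\<And>n. norm (x - s n) < d + 1/Suc n"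
    by metis
  have key: "norm (s m - s n)^2 \<le> (4*d+2) * (1/Suc m + 1/Suc n)" for m n
  proof -
    define em where "em = 1/real (Suc m)"
    define en where "en = 1/real (Suc n)"
    have em: "0 < em" "em \<le> 1" unfolding em_def by (auto simp: field_simps)
    have en: "0 < en" "en \<le> 1" unfolding en_def by (auto simp: field_simps)
    have mid: "(1/2) *\<^sub>R (s m + s n) \<in> S"
      using sS sub by (simp add: subspace_add subspace_scale)
    have "d \<le> norm (x - (1/2) *\<^sub>R (s m + s n))" by (rule dle[OF mid])
    also have "x - (1/2) *\<^sub>R (s m + s n) = (1/2) *\<^sub>R ((x - s m) + (x - s n))"
      by (simp add: algebra_simps flip: scaleR_add_left)
    finally have "2 * d \<le> norm ((x - s m) + (x - s n))" by simp
    then have "(2*d)^2 \<le> norm ((x - s m) + (x - s n))^2"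
      using d0 by (intro power_mono) auto
    then have h1: "4 * d^2 \<le> norm ((x - s m) + (x - s n))^2" by (simp add: power_mult_distrib)
    have p: "norm ((x - s m) - (x - s n))^2 + norm ((x - s m) + (x - s n))^2
          = 2*norm (x - s m)^2 + 2*norm (x - s n)^2" by (rule parallelogram)
    have "(x - s m) - (x - s n) = s n - s m" by simp
    then have nsym: "norm (s m - s n) = norm ((x - s m) - (x - s n))" by (simp add: norm_minus_commute)
    have a1: "norm (x - s m)^2 \<le> (d + em)^2"
      using sd[of m] by (intro power_mono) (auto simp: em_def)
    have a2: "norm (x - s n)^2 \<le> (d + en)^2"
      using sd[of n] by (intro power_mono) (auto simp: en_def)
    have "norm (s m - s n)^2 \<le> 2*(d+em)^2 + 2*(d+en)^2 - 4*d^2"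
      unfolding nsym using p h1 a1 a2 by linarith
    also have "\<dots> = 4*d*em + 2*em*em + 4*d*en + 2*en*en" by (simp add: power2_eq_square algebra_simps)
    also have "\<dots> \<le> (4*d+2)*(em+en)"
    proof -
      have "em*em \<le> em" "en*en \<le> en" using em en by (auto intro: mult_left_le)
      then show ?thesis using d0 by (simp add: algebra_simps)
    qed
    finally show ?thesis by (simp add: em_def en_def)
  qed
  have "Cauchy s"
  proof (rule metric_CauchyI)
    fix e :: real assume e: "e > 0"
    obtain N :: nat where N: "(4*d+2) * 2 / e^2 < real N"
      using reals_Archimedean2 by blast
    show "\<exists>M. \<forall>m\<ge>M. \<forall>n\<ge>M. dist (s m) (s n) < e"
    proof (intro exI allI impI)
      fix m n assume mn: "N \<le> m" "N \<le> n"
      have "1/real (Suc m) \<le> 1/real (Suc N)" "1/real (Suc n) \<le> 1/real (Suc N)"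
        using mn by (auto simp: field_simps)
      then have "1/real (Suc m) + 1/real (Suc n) \<le> 2/real (Suc N)" by simp
      then have "(4*d+2) * (1/real (Suc m) + 1/real (Suc n)) \<le> (4*d+2) * (2/real (Suc N))"
        using d0 by (intro mult_left_mono) auto
      then have "norm (s m - s n)^2 \<le> (4*d+2) * (2/real (Suc N))"
        using key[of m n] by (rule_tac order_trans) auto
      also have "\<dots> < e^2"
      proof -
        have e2: "e^2 > 0" using e by simp
        have "(4*d+2) * 2 < e^2 * real N" using N e2 by (simp add: pos_divide_less_eq mult.commute)
        also have "\<dots> \<le> e^2 * real (Suc N)" using e2 by simp
        finally show ?thesis by (simp add: pos_divide_less_eq)
      qed
      finally have "norm (s m - s n)^2 < e^2" .
      then have "norm (s m - s n) < e" using e by (simp add: power_less_imp_less_base)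
      then show "dist (s m) (s n) < e" by (simp add: dist_norm)
    qed
  qed
  then obtain s0 where lim: "s \<longlonglongrightarrow> s0" using convergent_eq_Cauchy by blast
  have s0S: "s0 \<in> S" using closed_sequentially[OF cl] sS lim by blast
  have "(\<lambda>n. norm (x - s n)) \<longlonglongrightarrow> norm (x - s0)"
    by (intro tendsto_intros lim)
  moreover have "(\<lambda>n. d + 1/Suc n) \<longlonglongrightarrow> d + 0"
    by (intro tendsto_intros LIMSEQ_inverse_real_of_nat[unfolded inverse_eq_divide]) 
  ultimately have "norm (x - s0) \<le> d"
    using sd by (intro LIMSEQ_le[where X="\<lambda>n. norm (x - s n)"]) (auto intro: less_imp_le)
  then have nd: "norm (x - s0) = d" using dle[OF s0S] by simp
  show ?thesis
  proof (intro bexI[OF _ s0S] ballI)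
    fix t assume tS: "t \<in> S"
    define c where "c = inner (x - s0) t"
    show "c = 0"
    proof (cases "t = 0")
      case True then show ?thesis by (simp add: c_def)
    next
      case False
      define l where "l = c / (inner t t)"
      have tt: "inner t t > 0" using False by simp
      have "s0 + l *\<^sub>R t \<in> S" using s0S tS sub by (simp add: subspace_add subspace_scale)
      then have "d \<le> norm (x - (s0 + l *\<^sub>R t))" by (rule dle)
      then have "norm (x - s0)^2 \<le> norm (x - (s0 + l *\<^sub>R t))^2"
        using nd d0 by (intro power_mono) auto
      also have "\<dots> = norm (x - s0)^2 - 2*l*c + l^2 * inner t t"
        by (simp only: power2_norm_eq_inner) (simp add: inner_diff inner_add inner_commute c_def power2_eq_square algebra_simps)
      finally have "0 \<le> l^2 * inner t t - 2*l*c" by simp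
      also have "l^2 * inner t t - 2*l*c = -(c^2 / inner t t)"
        using tt by (simp add: l_def power2_eq_square field_simps)
      finally have "c^2 / inner t t \<le> 0" by simp
      then have "c^2 \<le> 0" using tt by (simp add: divide_le_0_iff)
      then show ?thesis by simp
    qed
  qed
qed


lemma weak_limit_in:
  fixes S :: "'b::{real_inner,complete_space} set"
  assumes sub: "subspace S" and cl: "closed S" and xS: "\<And>n. x n \<in> S"
    and wk: "\<And>w. (\<lambda>n. inner (x n) w) \<longlonglongrightarrow> inner y w"
  shows "y \<in> S"
proof -
  obtain s where sS: "s \<in> S" and orth: "\<And>t. t \<in> S \<Longrightarrow> inner (y - s) t = 0"
    using proj_exists[OF sub cl, of y] by blast
  have "(\<lambda>n. inner (x n) (y - s)) = (\<lambda>n. 0)"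
    using orth[OF xS] by (simp add: inner_commute)
  then have "inner y (y - s) = 0" using wk[of "y - s"] by (simp add: LIMSEQ_const_iff)
  moreover have "inner s (y - s) = 0" using orth[OF sS] by (simp add: inner_commute)
  ultimately have "inner (y - s) (y - s) = 0" by (simp add: inner_diff_left)
  then have "y = s" by simp
  then show ?thesis using sS by simp
qed

lemma riesz:
  fixes f :: "'b::{real_inner,complete_space} \<Rightarrow> real"
  assumes bl: "bounded_linear f"
  shows "\<exists>r. \<forall>x. f x = inner x r"
proof (cases "\<forall>x. f x = 0")
  case True then show ?thesis by (intro exI[of _ 0]) simp
next
  case False
  then obtain x0 where x0: "f x0 \<noteq> 0" by blast
  interpret f: bounded_linear f by (rule bl)
  have sub: "subspace {x. f x = 0}"
    unfolding subspace_def by (simp add: f.add f.scale f.zero)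
  have cl: "closed {x. f x = 0}"
    by (intro closed_Collect_eq continuous_intros f.continuous_on continuous_on_const)
  obtain s where s: "f s = 0" and orth: "\<And>t. f t = 0 \<Longrightarrow> inner (x0 - s) t = 0"
    using proj_exists[OF sub cl, of x0] by blast
  define e where "e = x0 - s"
  have fe: "f e = f x0" using s by (simp add: e_def f.diff)
  have ene: "e \<noteq> 0" using fe x0 by auto
  have ee: "inner e e \<noteq> 0" using ene by simp
  show ?thesis
  proof (intro exI allI)
    fix x
    have "f (x - (f x / f e) *\<^sub>R e) = 0" using fe x0 by (simp add: f.diff f.scale)
    then have "inner e (x - (f x / f e) *\<^sub>R e) = 0" using orth e_def by blast
    then have "inner e x = (f x / f e) * inner e e" by (simp add: inner_diff_right)
    then show "f x = inner x ((f e / inner e e) *\<^sub>R e)"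
      using ee fe x0 by (simp add: inner_commute field_simps)
  qed
qed


lemma subspace_closure_gen:
  fixes S :: "'b::real_normed_vector set"
  assumes sub: "subspace S"
  shows "subspace (closure S)"
  unfolding subspace_def
proof (intro conjI ballI allI)
  show "0 \<in> closure S" using sub subspace_0 closure_subset by blast
next
  fix x y assume "x \<in> closure S" "y \<in> closure S"
  then obtain X Y where X: "\<And>n. X n \<in> S" "X \<longlonglongrightarrow> x" and Y: "\<And>n. Y n \<in> S" "Y \<longlonglongrightarrow> y"
    unfolding closure_sequential by blast
  have "(\<lambda>n. X n + Y n) \<longlonglongrightarrow> x + y" by (intro tendsto_intros X Y)
  moreover have "\<And>n. X n + Y n \<in> S" using X Y sub by (simp add: subspace_add)
  ultimately show "x + y \<in> closure S" unfolding closure_sequential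
    by (intro exI[where x="\<lambda>n. X n + Y n"]) auto
next
  fix c :: real and x assume "x \<in> closure S"
  then obtain X where X: "\<And>n. X n \<in> S" "X \<longlonglongrightarrow> x"
    unfolding closure_sequential by blast
  have "(\<lambda>n. c *\<^sub>R X n) \<longlonglongrightarrow> c *\<^sub>R x" by (intro tendsto_intros X)
  moreover have "\<And>n. c *\<^sub>R X n \<in> S" using X sub by (simp add: subspace_scale)
  ultimately show "c *\<^sub>R x \<in> closure S" unfolding closure_sequential
    by (intro exI[where x="\<lambda>n. c *\<^sub>R X n"]) auto
qed

lemma closed_op_adj: "closed (op_adj (G::('b::real_inner \<times> 'b) set))"
proof -
  have "op_adj G = (\<Inter>p\<in>G. {q. inner (snd p) (fst q) = inner (fst p) (snd q)})"
    unfolding op_adj_def by fastforce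
  also have "closed \<dots>"
    by (intro closed_INT ballI closed_Collect_eq continuous_intros)
  finally show ?thesis .
qed

lemma adj_closure:
  fixes G :: "('b::real_inner \<times> 'b) set"
  assumes "(f,g) \<in> closure G" "(u,v) \<in> op_adj G"
  shows "inner g u = inner f v"
proof -
  have "G \<subseteq> {p. inner (snd p) u = inner (fst p) v}"
    using assms(2) unfolding op_adj_def by auto
  moreover have "closed {p. inner (snd p) u = inner (fst p) v}"
    by (intro closed_Collect_eq continuous_intros)
  ultimately have "closure G \<subseteq> {p. inner (snd p) u = inner (fst p) v}"
    by (rule closure_minimal)
  then show ?thesis using assms(1) by auto
qed



lemma op_dom_iff: "x \<in> op_dom G \<longleftrightarrow> (\<exists>y. (x,y) \<in> G)"
  unfolding op_dom_def by force

lemma op_ran_iff: "y \<in> op_ran G \<longleftrightarrow> (\<exists>x. (x,y) \<in> G)"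
  unfolding op_ran_def by force


theorem theorem1:
  fixes A A0 :: "('a::{real_inner, complete_space} \<times> 'a) set"
    and T :: "nat \<Rightarrow> 'a \<Rightarrow> 'a"
  assumes A_op: "is_operator A"
    and A_closable: "closable A"
    and A_dense: "densely_defined A"
    and A0_op: "is_operator A0"
    and A0_sub: "A0 \<subseteq> op_adj A"
    and T_bounded: "\<And>n. bounded_linear (T n)"
    and T_wot: "\<And>x y. (\<lambda>n. inner (T n x) y) \<longlonglongrightarrow> inner x y"
    and T_ran: "\<And>n. op_ran (op_graph (T n)) \<subseteq> op_dom (op_closure A)"
    and T_adj_ran: "\<And>n. op_ran (op_adj (op_graph (T n))) \<subseteq> op_dom (op_closure A0)"
    and comm_bdd: "(SUP n. op_norm (op_diff (op_comp (op_closure A) (op_graph (T n)))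
                                        (op_comp (op_graph (T n)) (op_closure A)))) < \<infinity>"
  shows "op_closure A0 = op_adj A"
proof
  have cl0: "closure A0 \<subseteq> op_adj A"
    by (rule closure_minimal[OF A0_sub closed_op_adj])
  then show "op_closure A0 \<subseteq> op_adj A" by (simp add: op_closure_def)
  show "op_adj A \<subseteq> op_closure A0"
  proof clarify
    fix y z assume yz: "(y,z) \<in> op_adj A"
    have subA: "subspace (closure A)"
      using A_op by (simp add: is_operator_def subspace_closure_gen)
    have subA0: "subspace (closure A0)"
      using A0_op by (simp add: is_operator_def subspace_closure_gen)
    have funA: "\<And>x g h. (x,g) \<in> closure A \<Longrightarrow> (x,h) \<in> closure A \<Longrightarrow> g = h"
      using A_closable by (auto simp: closable_def is_operator_def)
    have lin: "\<And>n. linear (T n)" using T_bounded bounded_linear.linear by blast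
    define C where "C n = op_diff (op_comp (op_closure A) (op_graph (T n)))
                                  (op_comp (op_graph (T n)) (op_closure A))" for n
    obtain M where M: "\<And>n. op_norm (C n) \<le> ereal M"
    proof -
      let ?K = "SUP n. op_norm (C n)"
      have K: "?K < \<infinity>" using comm_bdd by (simp add: C_def)
      obtain M where "?K \<le> ereal M"
        using K by (cases ?K) auto
      then show ?thesis using that by (meson SUP_upper UNIV_I order_trans)
    qed
    have bnd: "norm (h - T n g) \<le> M * norm f"
      if fg: "(f,g) \<in> closure A" and h: "(T n f, h) \<in> closure A" for n f g h
    proof (cases "f = 0")
      case True
      have z0: "(0,0) \<in> closure A" using subA subspace_0 by (metis zero_prod_def)
      have "g = 0" using funA[OF fg[unfolded True] z0] .
      moreover have "T n 0 = 0" using lin linear_0 by blast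
      then have "h = 0" using funA[OF _ z0, of h] h True by simp
      ultimately show ?thesis using True by (simp add: lin linear_0)
    next
      case False
      define c where "c = 1 / norm f"
      have c: "c > 0" using False by (simp add: c_def)
      have m1: "(c *\<^sub>R f, c *\<^sub>R g) \<in> closure A"
        using subspace_scale[OF subA fg, of c] by simp
      have "(c *\<^sub>R T n f, c *\<^sub>R h) \<in> closure A"
        using subspace_scale[OF subA h, of c] by simp
      then have m2: "(T n (c *\<^sub>R f), c *\<^sub>R h) \<in> closure A"
        using lin by (simp add: linear_scale)
      have "(c *\<^sub>R f, c *\<^sub>R h - T n (c *\<^sub>R g)) \<in> C n"
        unfolding C_def op_diff_def op_comp_def op_graph_def op_closure_def
        using m1 m2 by blast
      moreover have "norm (c *\<^sub>R f) \<le> 1" using False by (simp add: c_def)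
      ultimately have "ereal (norm (c *\<^sub>R h - T n (c *\<^sub>R g))) \<le> op_norm (C n)"
        unfolding op_norm_def by (intro SUP_upper2[where i="(c *\<^sub>R f, c *\<^sub>R h - T n (c *\<^sub>R g))"]) auto
      then have "norm (c *\<^sub>R h - T n (c *\<^sub>R g)) \<le> M" using M[of n] by (meson ereal_less_eq(3) order_trans)
      also have "c *\<^sub>R h - T n (c *\<^sub>R g) = c *\<^sub>R (h - T n g)"
        using lin by (simp add: linear_scale algebra_simps)
      finally have "c * norm (h - T n g) \<le> M" using c by simp
      then show ?thesis using False by (simp add: c_def field_simps)
    qed
    have ex_adj: "\<exists>r. \<forall>x. inner (T n x) a = inner x r" for n a
      by (rule riesz) (intro bounded_linear_inner_left_comp T_bounded)
    obtain u where u: "\<And>n x. inner (T n x) y = inner x (u n)"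
      using ex_adj[of _ y] by metis
    obtain w where w: "\<And>n x. inner (T n x) z = inner x (w n)"
      using ex_adj[of _ z] by metis
    have "\<exists>v. (u n, v) \<in> closure A0" for n
    proof -
      have "(y, u n) \<in> op_adj (op_graph (T n))"
        unfolding op_adj_def op_graph_def using u by auto
      then have "u n \<in> op_ran (op_adj (op_graph (T n)))" unfolding op_ran_iff by blast
      then have "u n \<in> op_dom (closure A0)" using T_adj_ran[of n] unfolding op_closure_def by blast
      then show ?thesis unfolding op_dom_iff .
    qed
    then obtain v where v: "\<And>n. (u n, v n) \<in> closure A0" by metis
    define e where "e n = v n - w n" for n
    have ef: "inner f (e n) = inner (T n g) y - inner (T n f) z"
      if fg: "(f,g) \<in> closure A" for n f g
    proof -
      have "inner g (u n) = inner f (v n)" using adj_closure[OF fg] v cl0 by blast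
      then show ?thesis using u[of n g] w[of n f] by (simp add: e_def inner_diff_right)
    qed
    define B where "B = M * norm y"
    have ebnd: "\<bar>inner q (e n)\<bar> \<le> B * norm q" for n q
    proof -
      have "op_dom (closure A) \<subseteq> {q. \<bar>inner q (e n)\<bar> \<le> B * norm q}"
      proof
        fix f assume "f \<in> op_dom (closure A)"
        then obtain g where fg: "(f,g) \<in> closure A" unfolding op_dom_iff by blast
        have "T n f \<in> op_ran (op_graph (T n))"
          unfolding op_ran_iff op_graph_def by blast
        then have "T n f \<in> op_dom (closure A)" using T_ran[of n] unfolding op_closure_def by blast
        then obtain h where h: "(T n f, h) \<in> closure A" unfolding op_dom_iff by blast
        have "inner h y = inner (T n f) z" using adj_closure[OF h yz] .
        then have "inner f (e n) = - inner (h - T n g) y" using ef[OF fg, of n] by (simp add: inner_diff_left)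
        then have "\<bar>inner f (e n)\<bar> \<le> norm (h - T n g) * norm y"
          using Cauchy_Schwarz_ineq2[of "h - T n g" y] by simp
        also have "\<dots> \<le> M * norm f * norm y" using bnd[OF fg h] by (simp add: mult_right_mono)
        finally show "f \<in> {q. \<bar>inner q (e n)\<bar> \<le> B * norm q}" by (simp add: B_def algebra_simps)
      qed
      moreover have "closed {q. \<bar>inner q (e n)\<bar> \<le> B * norm q}"
        by (intro closed_Collect_le continuous_intros)
      ultimately have "closure (op_dom (closure A)) \<subseteq> {q. \<bar>inner q (e n)\<bar> \<le> B * norm q}"
        by (rule closure_minimal)
      moreover have "closure (op_dom (closure A)) = UNIV"
      proof -
        have "op_dom A \<subseteq> op_dom (closure A)" unfolding op_dom_def using closure_subset by blast
        then have "closure (op_dom A) \<subseteq> closure (op_dom (closure A))" by (rule closure_mono)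
        then show ?thesis using A_dense by (auto simp: densely_defined_def)
      qed
      ultimately show ?thesis by auto
    qed
    have dense: "closure (op_dom (closure A)) = UNIV"
    proof -
      have "op_dom A \<subseteq> op_dom (closure A)" unfolding op_dom_def using closure_subset by blast
      then have "closure (op_dom A) \<subseteq> closure (op_dom (closure A))" by (rule closure_mono)
      then show ?thesis using A_dense by (auto simp: densely_defined_def)
    qed
    have elim: "(\<lambda>n. inner q (e n)) \<longlonglongrightarrow> 0" for q
    proof (rule LIMSEQ_I)
      fix r :: real assume r: "r > 0"
      have "q \<in> closure (op_dom (closure A))" using dense by simp
      moreover have "r / (2 * (\<bar>B\<bar> + 1)) > 0" using r by simp
      ultimately obtain f where fD: "f \<in> op_dom (closure A)" and fq: "dist f q < r / (2 * (\<bar>B\<bar> + 1))"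
        unfolding closure_approachable by blast
      obtain g where fg: "(f,g) \<in> closure A" using fD unfolding op_dom_iff by blast
      have "(\<lambda>n. inner (T n g) y - inner (T n f) z) \<longlonglongrightarrow> inner g y - inner f z"
        by (intro tendsto_diff T_wot)
      moreover have "inner g y = inner f z" using adj_closure[OF fg yz] .
      ultimately have "(\<lambda>n. inner f (e n)) \<longlonglongrightarrow> 0" using ef[OF fg] by simp
      moreover have "r/2 > 0" using r by simp
      ultimately obtain N where N: "\<And>n. n \<ge> N \<Longrightarrow> norm (inner f (e n) - 0) < r/2"
        using LIMSEQ_D by blast
      have "\<bar>B\<bar> * norm (q - f) \<le> \<bar>B\<bar> * (r / (2 * (\<bar>B\<bar> + 1)))"
        using fq by (intro mult_left_mono) (auto simp: dist_norm norm_minus_commute)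
      also have "\<dots> \<le> r/2" using r by (simp add: field_simps)
      finally have Bq: "\<bar>B\<bar> * norm (q - f) \<le> r/2" .
      show "\<exists>no. \<forall>n\<ge>no. norm (inner q (e n) - 0) < r"
      proof (intro exI allI impI)
        fix n assume n: "n \<ge> N"
        have "inner q (e n) = inner (q - f) (e n) + inner f (e n)" by (simp add: inner_diff_left)
        then have "\<bar>inner q (e n)\<bar> \<le> \<bar>inner (q - f) (e n)\<bar> + \<bar>inner f (e n)\<bar>" by linarith
        also have "\<bar>inner (q - f) (e n)\<bar> \<le> \<bar>B\<bar> * norm (q - f)"
          using ebnd[of "q - f" n] by (smt (verit) mult_right_mono norm_ge_zero)
        finally show "norm (inner q (e n) - 0) < r" using N[OF n] Bq by simp
      qed
    qed
    have wk: "(\<lambda>n. inner (u n, v n) pq) \<longlonglongrightarrow> inner (y, z) pq" for pq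
    proof (cases pq)
      case (Pair p q)
      have "(\<lambda>n. inner (T n p) y + (inner (T n q) z + inner q (e n))) \<longlonglongrightarrow> inner p y + (inner q z + 0)"
        by (intro tendsto_add T_wot elim)
      moreover have "inner (u n, v n) pq = inner (T n p) y + (inner (T n q) z + inner q (e n))" for n
        using u[of n p] w[of n q] Pair by (simp add: e_def inner_diff_right inner_commute)
      ultimately show ?thesis using Pair by (simp add: inner_commute)
    qed
    have "(y, z) \<in> closure A0"
      by (rule weak_limit_in[OF subA0 closed_closure v wk])
    then show "(y, z) \<in> op_closure A0" by (simp add: op_closure_def)
  qed
qed

end
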